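(* There exist $\varepsilon_0>0$ and a function $\delta:(0,\varepsilon_0)\to(0,\infty)$ with $\delta(\varepsilon)\to0$ as $\varepsilon\to0$ such that the following holds. Let $(\varphi_i)_{i\in\mathbb{N}}\subset[0,\infty)$ with $\sum_i\varphi_i=\Phi>0$ and $\varphi_0\ge\varphi_i$ for all $i\in\mathbb{N}$, and suppose that for some $\varepsilon\in(0,\varepsilon_0)$, $$\sum_i\varphi_i^{1/2}-\Phi^{1/2}\le\varepsilon\Phi^{1/2}.$$ Then $\Phi-\varphi_0\le\delta(\varepsilon)\Phi$. *)

theory Defs
  imports Complex_Main
begin

end

theory Submission
  imports Defs
begin

lemma key:
  fixes \<phi> :: "nat \<Rightarrow> real" and \<Phi> \<epsilon> :: real
  assumes nn: "\<forall>i. \<phi> i \<ge> 0" and su: "\<phi> sums \<Phi>" and Pp: "\<Phi> > 0"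
    and mx: "\<forall>i. \<phi> 0 \<ge> \<phi> i" and ep: "\<epsilon> > 0"
    and sm: "summable (\<lambda>i. sqrt (\<phi> i))"
    and h: "(\<Sum>i. sqrt (\<phi> i)) - sqrt \<Phi> \<le> \<epsilon> * sqrt \<Phi>"
  shows "\<Phi> - \<phi> 0 \<le> (1 - 1 / (1 + \<epsilon>)^2) * \<Phi>"
proof -
  define s where "s = sqrt (\<phi> 0)"
  define P where "P = sqrt \<Phi>"
  have s0: "s \<ge> 0" using nn s_def by simp
  have P0: "P > 0" using Pp P_def by simp
  have le: "\<phi> i \<le> s * sqrt (\<phi> i)" for i
  proof -
    have "sqrt (\<phi> i) \<le> s" unfolding s_def using mx by simp
    then have "sqrt (\<phi> i) * sqrt (\<phi> i) \<le> s * sqrt (\<phi> i)"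
      by (rule mult_right_mono) (simp add: nn)
    moreover have "sqrt (\<phi> i) * sqrt (\<phi> i) = \<phi> i" using nn by simp
    ultimately show ?thesis by simp
  qed
  have "\<Phi> = (\<Sum>i. \<phi> i)" using su by (simp add: sums_iff)
  also have "\<dots> \<le> (\<Sum>i. s * sqrt (\<phi> i))"
    using le su sm by (intro suminf_le) (auto simp: sums_iff summable_mult)
  also have "\<dots> = s * (\<Sum>i. sqrt (\<phi> i))" using sm by (simp add: suminf_mult)
  also have "\<dots> \<le> s * ((1 + \<epsilon>) * P)" using h s0 unfolding P_def
    by (intro mult_left_mono) (auto simp: algebra_simps)
  finally have "P * P \<le> (s * (1 + \<epsilon>)) * P" unfolding P_def using Pp
    by (simp add: algebra_simps)
  then have "P \<le> s * (1 + \<epsilon>)" using P0 by simp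
  then have "P^2 \<le> (s * (1 + \<epsilon>))^2" using P0 by (intro power_mono) auto
  then have "\<Phi> \<le> \<phi> 0 * (1 + \<epsilon>)^2"
    unfolding P_def s_def using Pp nn by (simp add: power_mult_distrib)
  then have "\<Phi> / (1 + \<epsilon>)^2 \<le> \<phi> 0" using ep by (simp add: divide_le_eq)
  then show ?thesis by (simp add: algebra_simps)
qed

theorem proposition2p3:
  shows "\<exists>\<epsilon>0::real. \<epsilon>0 > 0 \<and> (\<exists>\<delta>::real \<Rightarrow> real.
     (\<forall>\<epsilon>\<in>{0<..<\<epsilon>0}. \<delta> \<epsilon> > 0) \<and>
     (\<delta> \<longlongrightarrow> 0) (at_right 0) \<and>
     (\<forall>(\<phi>::nat \<Rightarrow> real) (\<Phi>::real) (\<epsilon>::real).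
        (\<forall>i. \<phi> i \<ge> 0) \<longrightarrow> \<phi> sums \<Phi> \<longrightarrow> \<Phi> > 0 \<longrightarrow>
        (\<forall>i. \<phi> 0 \<ge> \<phi> i) \<longrightarrow> \<epsilon> \<in> {0<..<\<epsilon>0} \<longrightarrow>
        summable (\<lambda>i. sqrt (\<phi> i)) \<longrightarrow>
        (\<Sum>i. sqrt (\<phi> i)) - sqrt \<Phi> \<le> \<epsilon> * sqrt \<Phi> \<longrightarrow>
        \<Phi> - \<phi> 0 \<le> \<delta> \<epsilon> * \<Phi>))"
proof (intro exI[of _ 1] conjI exI[of _ "\<lambda>e::real. 1 - 1 / (1 + e)^2"])
  show "(1::real) > 0" by simp
  show "\<forall>\<epsilon>\<in>{0<..<1::real}. 1 - 1 / (1 + \<epsilon>)^2 > 0"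
  proof
    fix e :: real assume "e \<in> {0<..<1}"
    then have "1 < (1 + e)^2" by (simp add: power2_eq_square algebra_simps add_pos_pos)
    then show "1 - 1 / (1 + e)^2 > 0" by (auto simp: divide_less_eq)
  qed
  have "((\<lambda>e::real. 1 - 1 / (1 + e)^2) \<longlongrightarrow> 1 - 1 / (1 + 0)^2) (at_right 0)"
    by (intro tendsto_intros) auto
  then show "((\<lambda>e::real. 1 - 1 / (1 + e)^2) \<longlongrightarrow> 0) (at_right 0)" by simp
  show "\<forall>(\<phi>::nat \<Rightarrow> real) (\<Phi>::real) (\<epsilon>::real).
        (\<forall>i. \<phi> i \<ge> 0) \<longrightarrow> \<phi> sums \<Phi> \<longrightarrow> \<Phi> > 0 \<longrightarrow>
        (\<forall>i. \<phi> 0 \<ge> \<phi> i) \<longrightarrow> \<epsilon> \<in> {0<..<1} \<longrightarrow>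
        summable (\<lambda>i. sqrt (\<phi> i)) \<longrightarrow>
        (\<Sum>i. sqrt (\<phi> i)) - sqrt \<Phi> \<le> \<epsilon> * sqrt \<Phi> \<longrightarrow>
        \<Phi> - \<phi> 0 \<le> (1 - 1 / (1 + \<epsilon>)^2) * \<Phi>"
    using key by auto
qed

end
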